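(* For every acyclic weighted digraph $D$ in which every arc has weight at least $1$, $\mathrm{mac}(D)\ge\frac{w(D)}{4}+\frac{w(D)^{0.6}}{24}$.
   Context: A weighted digraph $D=(V,A,w)$ is a digraph without loops or parallel arcs (opposite arcs allowed) with weights $w:A\to\mathbb{R}_{\ge0}$; $w(D)$ is the total arc weight. For a partition $(X,Y)$ of $V$, $w(X,Y)$ is the total weight of arcs from $X$ to $Y$, and $\mathrm{mac}(D)=\max_{(X,Y)}w(X,Y)$. Acyclic means containing no directed cycle. *)

theory Defs
  imports Main "HOL-Library.Disjoint_Sets" Complex_Main
begin

text \<open>A weighted digraph (V, A, w): finite vertex set V, arc set A \<subseteq> V \<times> V
  without loops (parallel arcs are excluded since A is a set; opposite arcs are allowed),
  and nonnegative weights w on arcs.\<close>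
definition weighted_digraph :: "'a set \<Rightarrow> ('a \<times> 'a) set \<Rightarrow> ('a \<times> 'a \<Rightarrow> real) \<Rightarrow> bool" where
  "weighted_digraph V A w \<longleftrightarrow> finite V \<and> A \<subseteq> V \<times> V \<and> (\<forall>v. (v, v) \<notin> A)
     \<and> (\<forall>a\<in>A. w a \<ge> 0)"

definition total_weight :: "('a \<times> 'a) set \<Rightarrow> ('a \<times> 'a \<Rightarrow> real) \<Rightarrow> real" where
  "total_weight A w = (\<Sum>a\<in>A. w a)"

definition cut_weight :: "('a \<times> 'a) set \<Rightarrow> ('a \<times> 'a \<Rightarrow> real) \<Rightarrow> 'a set \<Rightarrow> 'a set \<Rightarrow> real" where
  "cut_weight A w X Y = (\<Sum>a\<in>{(x, y) \<in> A. x \<in> X \<and> y \<in> Y}. w a)"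

definition mac :: "'a set \<Rightarrow> ('a \<times> 'a) set \<Rightarrow> ('a \<times> 'a \<Rightarrow> real) \<Rightarrow> real" where
  "mac V A w = Max ((\<lambda>X. cut_weight A w X (V - X)) ` Pow V)"

end

theory Submission
  imports Defs
begin


definition fw :: "('a \<times> 'a) set \<Rightarrow> ('a \<times> 'a \<Rightarrow> real) \<Rightarrow> ('a \<Rightarrow> real) \<Rightarrow> real" where
  "fw A w p = (\<Sum>e\<in>A. w e * p (fst e) * (1 - p (snd e)))"

lemma wd_facts:
  assumes "weighted_digraph V A w"
  shows "finite V" "A \<subseteq> V \<times> V" "finite A" "\<And>v. (v,v) \<notin> A" "\<And>a. a \<in> A \<Longrightarrow> w a \<ge> 0"
  using assms unfolding weighted_digraph_def
  by (auto intro: finite_subset[of A "V \<times> V"])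

lemma round_base:
  assumes wd: "weighted_digraph V A w" and p01: "\<forall>v\<in>V. p v = 0 \<or> p v = 1"
  shows "fw A w p \<le> mac V A w"
proof -
  note F = wd_facts[OF wd]
  let ?X = "{v\<in>V. p v = 1}"
  have seteq: "{(x, y) \<in> A. x \<in> ?X \<and> y \<in> V - ?X} = {e\<in>A. p (fst e) = 1 \<and> p (snd e) = 0}"
    using F(2) p01 by fastforce
  have "fw A w p = (\<Sum>e\<in>A. if p (fst e) = 1 \<and> p (snd e) = 0 then w e else 0)"
    unfolding fw_def
  proof (rule sum.cong[OF refl])
    fix e assume "e \<in> A"
    then have "fst e \<in> V" "snd e \<in> V" using F(2) by auto
    then show "w e * p (fst e) * (1 - p (snd e)) = (if p (fst e) = 1 \<and> p (snd e) = 0 then w e else 0)"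
      using p01 by fastforce
  qed
  also have "\<dots> = cut_weight A w ?X (V - ?X)"
    unfolding cut_weight_def seteq using F(3) by (simp add: sum.inter_filter)
  also have "\<dots> \<le> mac V A w"
    unfolding mac_def by (rule Max_ge) (use F(1) in auto)
  finally show ?thesis .
qed

lemma fw_split:
  assumes "\<And>v. (v,v) \<notin> A"
  shows "fw A w p = (1 - p z) * fw A w (p(z:=0)) + p z * fw A w (p(z:=1))"
  unfolding fw_def sum_distrib_left sum.distrib[symmetric]
proof (rule sum.cong[OF refl])
  fix e assume "e \<in> A"
  obtain a b where e: "e = (a,b)" by force
  with assms \<open>e \<in> A\<close> have "a \<noteq> b" by auto
  then show "w e * p (fst e) * (1 - p (snd e)) =
     (1 - p z) * (w e * (p(z := 0)) (fst e) * (1 - (p(z := 0)) (snd e))) +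
     p z * (w e * (p(z := 1)) (fst e) * (1 - (p(z := 1)) (snd e)))"
    unfolding e by (cases "a = z"; cases "b = z") (auto simp: algebra_simps)
qed

lemma round_gen:
  assumes wd: "weighted_digraph V A w" and fS: "finite S"
  shows "\<forall>p::'a \<Rightarrow> real. (\<forall>v\<in>V. 0 \<le> p v \<and> p v \<le> 1) \<and> (\<forall>v\<in>V - S. p v = 0 \<or> p v = 1) \<longrightarrow> fw A w p \<le> mac V A w"
  using fS
proof (induction S rule: finite_induct)
  case empty
  then show ?case using round_base[OF wd] by auto
next
  case (insert z S)
  show ?case
  proof (intro allI impI)
    fix p :: "'a \<Rightarrow> real" assume hp: "(\<forall>v\<in>V. 0 \<le> p v \<and> p v \<le> 1) \<and> (\<forall>v\<in>V - insert z S. p v = 0 \<or> p v = 1)"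
    have h0: "fw A w (p(z:=0)) \<le> mac V A w"
      using insert.IH hp by auto
    have h1: "fw A w (p(z:=1)) \<le> mac V A w"
      using insert.IH hp by auto
    show "fw A w p \<le> mac V A w"
    proof (cases "z \<in> V")
      case True
      then have pz: "0 \<le> p z" "p z \<le> 1" using hp by auto
      have "fw A w p = (1 - p z) * fw A w (p(z:=0)) + p z * fw A w (p(z:=1))"
        by (rule fw_split) (use wd_facts[OF wd] in auto)
      also have "\<dots> \<le> (1 - p z) * mac V A w + p z * mac V A w"
        by (intro add_mono mult_left_mono h0 h1) (use pz in auto)
      also have "\<dots> = mac V A w" by (simp add: algebra_simps)
      finally show ?thesis .
    next
      case False
      then show ?thesis using insert.IH hp by auto
    qed
  qed
qed

lemma round:
  assumes wd: "weighted_digraph V A w" and "\<forall>v\<in>V. 0 \<le> p v \<and> p v \<le> 1"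
  shows "fw A w p \<le> mac V A w"
  using round_gen[OF wd wd_facts(1)[OF wd]] assms(2) by auto

definition sq :: "('a \<times> 'a) set \<Rightarrow> ('a \<times> 'a \<Rightarrow> real) \<Rightarrow> ('a \<Rightarrow> real) \<Rightarrow> real" where
  "sq A w y = (\<Sum>e\<in>A. w e * y (fst e) * y (snd e))"
definition dl :: "('a \<times> 'a) set \<Rightarrow> ('a \<times> 'a \<Rightarrow> real) \<Rightarrow> ('a \<Rightarrow> real) \<Rightarrow> real" where
  "dl A w y = (\<Sum>e\<in>A. w e * (y (fst e) - y (snd e)))"

lemma linq:
  assumes wd: "weighted_digraph V A w" and y: "\<forall>v\<in>V. \<bar>y v\<bar> \<le> 1"
  shows "total_weight A w / 4 + dl A w y / 4 - sq A w y / 4 \<le> mac V A w"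
proof -
  let ?p = "\<lambda>v. (1 + y v) / 2"
  have "fw A w ?p = (\<Sum>e\<in>A. w e / 4 + w e * (y (fst e) - y (snd e)) / 4 - w e * y (fst e) * y (snd e) / 4)"
    unfolding fw_def by (rule sum.cong[OF refl]) (auto simp: field_simps)
  also have "\<dots> = total_weight A w / 4 + dl A w y / 4 - sq A w y / 4"
    unfolding total_weight_def dl_def sq_def
    by (simp add: sum.distrib sum_subtractf sum_divide_distrib)
  finally have eq: "fw A w ?p = total_weight A w / 4 + dl A w y / 4 - sq A w y / 4" .
  have "fw A w ?p \<le> mac V A w"
    by (rule round[OF wd]) (use y in \<open>auto simp: abs_le_iff\<close>)
  then show ?thesis using eq by simp
qed

lemma cutq:
  assumes wd: "weighted_digraph V A w" and y: "\<forall>v\<in>V. \<bar>y v\<bar> \<le> 1"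
  shows "total_weight A w / 4 - sq A w y / 4 \<le> mac V A w"
proof -
  have a: "total_weight A w / 4 + dl A w y / 4 - sq A w y / 4 \<le> mac V A w"
    by (rule linq[OF wd y])
  have b: "total_weight A w / 4 + dl A w (\<lambda>v. - y v) / 4 - sq A w (\<lambda>v. - y v) / 4 \<le> mac V A w"
    by (rule linq[OF wd]) (use y in auto)
  have "dl A w (\<lambda>v. - y v) = - dl A w y" unfolding dl_def
    by (simp add: sum_negf[symmetric] algebra_simps)
  moreover have "sq A w (\<lambda>v. - y v) = sq A w y" unfolding sq_def by simp
  ultimately show ?thesis using a b by linarith
qed


definition matching :: "('a \<times> 'a) set \<Rightarrow> bool" where
  "matching M \<longleftrightarrow> (\<forall>e\<in>M. \<forall>e'\<in>M. e \<noteq> e' \<longrightarrow>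
     fst e \<noteq> fst e' \<and> fst e \<noteq> snd e' \<and> snd e \<noteq> fst e' \<and> snd e \<noteq> snd e')"

lemma matching_gain:
  assumes wd: "weighted_digraph V A w" and acyc: "acyclic A"
    and fin: "finite M" and MA: "M \<subseteq> A" and m: "matching M"
  shows "\<exists>y. (\<forall>v. \<bar>y v\<bar> \<le> 1) \<and> (\<forall>v. v \<notin> fst ` M \<union> snd ` M \<longrightarrow> y v = 0)
           \<and> (\<Sum>e\<in>M. w e) \<le> - sq A w y"
  using fin MA m
proof (induction M rule: finite_induct)
  case empty
  show ?case by (rule exI[of _ "\<lambda>_. 0"]) (simp add: sq_def)
next
  case (insert e M)
  note F = wd_facts[OF wd]
  have mM: "matching M" using insert.prems(2) unfolding matching_def by blast
  obtain y' where y'1: "\<forall>v. \<bar>y' v\<bar> \<le> 1" and y'2: "\<forall>v. v \<notin> fst ` M \<union> snd ` M \<longrightarrow> y' v = 0"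
    and y'3: "(\<Sum>e\<in>M. w e) \<le> - sq A w y'"
    using insert.IH insert.prems mM by auto
  define u where "u = fst e"
  define v where "v = snd e"
  have eA: "e \<in> A" using insert.prems by auto
  have e_eq: "e = (u, v)" unfolding u_def v_def by simp
  have uv: "u \<noteq> v" using F(4) eA e_eq by auto
  have vu: "(v, u) \<notin> A"
  proof
    assume "(v, u) \<in> A"
    then have "(u, u) \<in> A\<^sup>+" using eA e_eq by (meson trancl.simps trancl_into_trancl)
    then show False using acyc unfolding acyclic_def by blast
  qed
  have dis: "\<forall>e'\<in>M. fst e \<noteq> fst e' \<and> fst e \<noteq> snd e' \<and> snd e \<noteq> fst e' \<and> snd e \<noteq> snd e'"
    using insert.prems(2) insert.hyps(2) unfolding matching_def by (metis insertCI)
  have uM: "u \<notin> fst ` M \<union> snd ` M" and vM: "v \<notin> fst ` M \<union> snd ` M"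
    using dis unfolding u_def v_def by force+
  have y'u: "y' u = 0" and y'v: "y' v = 0" using y'2 uM vM by auto
  define ind where "ind x = (if x = u then 1 else if x = v then -1 else (0::real))" for x
  define T where "T = (\<Sum>f\<in>A. w f * (ind (fst f) * y' (snd f) + y' (fst f) * ind (snd f)))"
  define \<sigma> where "\<sigma> = (if T \<ge> 0 then -1 else (1::real))"
  define y where "y x = y' x + \<sigma> * ind x" for x
  have ss: "\<sigma> * \<sigma> = 1" unfolding \<sigma>_def by auto
  have sT: "\<sigma> * T \<le> 0" unfolding \<sigma>_def by auto
  have "sq A w y = (\<Sum>f\<in>A. w f * y' (fst f) * y' (snd f)
        + \<sigma> * (w f * (ind (fst f) * y' (snd f) + y' (fst f) * ind (snd f)))
        + w f * ind (fst f) * ind (snd f))"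
    unfolding sq_def y_def
  proof (rule sum.cong[OF refl])
    fix f
    have "w f * (y' (fst f) + \<sigma> * ind (fst f)) * (y' (snd f) + \<sigma> * ind (snd f)) =
      w f * y' (fst f) * y' (snd f)
        + \<sigma> * (w f * (ind (fst f) * y' (snd f) + y' (fst f) * ind (snd f)))
        + (\<sigma> * \<sigma>) * (w f * ind (fst f) * ind (snd f))"
      by (simp add: algebra_simps)
    then show "w f * (y' (fst f) + \<sigma> * ind (fst f)) * (y' (snd f) + \<sigma> * ind (snd f)) =
      w f * y' (fst f) * y' (snd f)
        + \<sigma> * (w f * (ind (fst f) * y' (snd f) + y' (fst f) * ind (snd f)))
        + w f * ind (fst f) * ind (snd f)" using ss by simp
  qed
  also have "\<dots> = sq A w y' + \<sigma> * T + (\<Sum>f\<in>A. w f * ind (fst f) * ind (snd f))"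
    unfolding sq_def T_def by (simp add: sum.distrib sum_distrib_left)
  also have "(\<Sum>f\<in>A. w f * ind (fst f) * ind (snd f)) = (\<Sum>f\<in>A. if f = e then - w e else 0)"
  proof (rule sum.cong[OF refl])
    fix f assume fA: "f \<in> A"
    obtain a b where fab: "f = (a, b)" by force
    show "w f * ind (fst f) * ind (snd f) = (if f = e then - w e else 0)"
      using fA fab uv vu F(4)[of u] F(4)[of v] e_eq unfolding ind_def by auto
  qed
  also have "\<dots> = - w e" using eA F(3) by simp
  finally have sqy: "sq A w y = sq A w y' + \<sigma> * T - w e" by simp
  show ?case
  proof (intro exI conjI allI impI)
    fix x
    show "\<bar>y x\<bar> \<le> 1" unfolding y_def ind_def \<sigma>_def using y'1 y'u y'v by auto
  next
    fix x assume "x \<notin> fst ` insert e M \<union> snd ` insert e M"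
    then show "y x = 0" unfolding y_def ind_def using y'2 u_def v_def by auto
  next
    show "sum w (insert e M) \<le> - sq A w y"
      using sqy sT y'3 insert.hyps by simp
  qed
qed

lemma maximal_matching:
  assumes "finite A"
  shows "\<exists>M. M \<subseteq> A \<and> matching M \<and> (\<forall>f\<in>A. fst f \<in> fst ` M \<union> snd ` M \<or> snd f \<in> fst ` M \<union> snd ` M)"
proof -
  let ?MM = "{M. M \<subseteq> A \<and> matching M}"
  have finMM: "finite ?MM" using assms by (auto intro: finite_subset[of _ "Pow A"])
  have ne: "{} \<in> ?MM" by (simp add: matching_def)
  obtain M where M: "M \<in> ?MM" "card M = Max (card ` ?MM)"
    using Max_in[of "card ` ?MM"] finMM ne by fastforce
  have maxM: "card M' \<le> card M" if "M' \<in> ?MM" for M'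
    using M(2) Max_ge[of "card ` ?MM" "card M'"] finMM that by auto
  have "\<forall>f\<in>A. fst f \<in> fst ` M \<union> snd ` M \<or> snd f \<in> fst ` M \<union> snd ` M"
  proof (rule ccontr)
    assume "\<not> ?thesis"
    then obtain f where fA: "f \<in> A" and nf: "fst f \<notin> fst ` M \<union> snd ` M" "snd f \<notin> fst ` M \<union> snd ` M"
      by blast
    have fM: "f \<notin> M" using nf by auto
    have "insert f M \<in> ?MM"
      using M(1) fA nf unfolding matching_def by (auto simp: image_iff)
    then have "card (insert f M) \<le> card M" by (rule maxM)
    moreover have "finite M" using M(1) assms finite_subset by auto
    ultimately show False using fM by simp
  qed
  then show ?thesis using M(1) by blast
qed

lemma bipartite_sq:
  assumes finA: "finite A" and touch: "\<forall>f\<in>A. fst f \<in> Q \<or> snd f \<in> Q"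
  shows "sq A w (\<lambda>x. if x \<in> Q then 1 else -1)
    = 2 * (\<Sum>f\<in>{f\<in>A. fst f \<in> Q \<and> snd f \<in> Q}. w f) - total_weight A w"
proof -
  have "sq A w (\<lambda>x. if x \<in> Q then 1 else -1)
     = (\<Sum>f\<in>A. 2 * (if fst f \<in> Q \<and> snd f \<in> Q then w f else 0) - w f)"
    unfolding sq_def by (rule sum.cong[OF refl]) (use touch in auto)
  also have "\<dots> = 2 * (\<Sum>f\<in>{f\<in>A. fst f \<in> Q \<and> snd f \<in> Q}. w f) - total_weight A w"
    unfolding total_weight_def using finA
    by (simp add: sum_subtractf sum_distrib_left[symmetric] sum.inter_filter)
  finally show ?thesis .
qed

lemma potential:
  assumes wd: "weighted_digraph V A w" and Wpos: "total_weight A w > 0"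
    and t01: "\<forall>x. 0 \<le> t x \<and> t x \<le> 1" and mono: "\<forall>f\<in>A. t (fst f) \<le> t (snd f)"
  shows "total_weight A w / 4 + (\<Sum>f\<in>A. w f * (t (snd f) - t (fst f)))^2 / (4 * total_weight A w)
          \<le> mac V A w"
proof -
  note F = wd_facts[OF wd]
  define W where "W = total_weight A w"
  define L where "L = (\<Sum>f\<in>A. w f * (t (snd f) - t (fst f)))"
  have L0: "L \<ge> 0" unfolding L_def using mono F(5) by (intro sum_nonneg) auto
  have LW: "L \<le> W" unfolding L_def W_def total_weight_def
  proof (rule sum_mono)
    fix f assume "f \<in> A"
    then have "w f \<ge> 0" using F(5) by auto
    moreover have "t (snd f) - t (fst f) \<le> 1" using t01 by (smt (verit))
    ultimately show "w f * (t (snd f) - t (fst f)) \<le> w f"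
      by (metis mult_left_le)
  qed
  define \<epsilon> where "\<epsilon> = L / W"
  have Wp: "W > 0" using Wpos W_def by simp
  have e0: "0 \<le> \<epsilon>" and e1: "\<epsilon> \<le> 1" unfolding \<epsilon>_def using L0 LW Wp by auto
  define y where "y x = \<epsilon> * (1 - 2 * t x)" for x
  have yb: "\<bar>y x\<bar> \<le> \<epsilon>" for x
  proof -
    have "\<bar>1 - 2 * t x\<bar> \<le> 1" using t01 by (smt (verit))
    then show ?thesis unfolding y_def using e0 by (simp add: abs_mult mult_left_le)
  qed
  have y1: "\<forall>v\<in>V. \<bar>y v\<bar> \<le> 1" using yb e1 by (meson order_trans)
  have dly: "dl A w y = 2 * \<epsilon> * L" unfolding dl_def L_def y_def
    by (simp add: sum_distrib_left algebra_simps)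
  have sqy: "sq A w y \<le> \<epsilon>^2 * W" unfolding sq_def W_def total_weight_def sum_distrib_left
  proof (rule sum_mono)
    fix f assume "f \<in> A"
    then have wf: "w f \<ge> 0" using F(5) by auto
    have "y (fst f) * y (snd f) \<le> \<bar>y (fst f)\<bar> * \<bar>y (snd f)\<bar>" by (simp add: abs_mult[symmetric])
    also have "\<dots> \<le> \<epsilon> * \<epsilon>" using yb e0 by (intro mult_mono) auto
    finally have "y (fst f) * y (snd f) \<le> \<epsilon>^2" by (simp add: power2_eq_square)
    then have "w f * (y (fst f) * y (snd f)) \<le> w f * \<epsilon>^2" using wf by (rule mult_left_mono)
    then show "w f * y (fst f) * y (snd f) \<le> \<epsilon>\<^sup>2 * w f" by (simp add: algebra_simps)
  qed
  have "W / 4 + dl A w y / 4 - sq A w y / 4 \<le> mac V A w"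
    using linq[OF wd y1] W_def by simp
  then have "W / 4 + 2 * \<epsilon> * L / 4 - \<epsilon>^2 * W / 4 \<le> mac V A w" using dly sqy by linarith
  moreover have "2 * \<epsilon> * L / 4 - \<epsilon>^2 * W / 4 = L^2 / (4 * W)"
    unfolding \<epsilon>_def using Wp by (simp add: field_simps power2_eq_square)
  ultimately show ?thesis unfolding W_def L_def by simp
qed

lemma ranking:
  assumes "finite S" and acyc: "acyclic A" and finA: "finite A"
  shows "\<exists>\<rho>::'a \<Rightarrow> nat. inj_on \<rho> S \<and> (\<forall>a b. (a,b) \<in> A \<longrightarrow> a \<in> S \<longrightarrow> b \<in> S \<longrightarrow> \<rho> a < \<rho> b)"
  using assms(1)
proof (induction S rule: finite_remove_induct)
  case empty
  then show ?case by auto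
next
  case (remove S)
  have wf: "wf A" by (rule finite_acyclic_wf[OF finA acyc])
  obtain z where z: "z \<in> S" "\<And>y. (y, z) \<in> A \<Longrightarrow> y \<notin> S"
    using wfE_min'[OF wf remove.hyps(2)] by metis
  obtain \<rho>' :: "'a \<Rightarrow> nat" where r1: "inj_on \<rho>' (S - {z})"
    and r2: "\<forall>a b. (a,b) \<in> A \<longrightarrow> a \<in> S - {z} \<longrightarrow> b \<in> S - {z} \<longrightarrow> \<rho>' a < \<rho>' b"
    using remove.IH[OF z(1)] by blast
  define \<rho> where "\<rho> x = (if x = z then 0 else Suc (\<rho>' x))" for x
  have "inj_on \<rho> S"
    unfolding inj_on_def \<rho>_def using r1 unfolding inj_on_def by auto
  moreover have "\<forall>a b. (a,b) \<in> A \<longrightarrow> a \<in> S \<longrightarrow> b \<in> S \<longrightarrow> \<rho> a < \<rho> b"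
    unfolding \<rho>_def using r2 z(2) by auto
  ultimately show ?case by blast
qed


lemma W3r_aux:
  fixes W r :: real
  assumes W0: "W > 0" and r6: "r > 6" and r5: "r^5 = W^3"
  shows "W > 3*r"
proof (rule ccontr)
  have r0: "r > 0" using r6 by simp
  assume "\<not> W > 3*r"
  then have "W \<le> 3*r" by simp
  then have "W^3 \<le> (3*r)^3" using W0 by (intro power_mono) auto
  also have "(3*r)^3 = 27 * r^3" by (simp only: power_mult_distrib) simp
  finally have h: "r^2 * r^3 \<le> 27 * r^3" using r5 by (simp only: power_add[symmetric]) simp
  have r3: "r^3 > 0" using r0 by simp
  have "r^2 \<le> 27" using h r3 by (simp only: mult_le_cancel_right_pos)
  moreover have "6 * 6 < r * r" using r6 by (intro mult_strict_mono) auto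
  ultimately show False by (simp add: power2_eq_square)
qed

lemma numeric:
  fixes W r g q \<beta> s a L :: real
  assumes W0: "W > 0" and r6: "r > 6" and r5: "r^5 = W^3"
    and g: "g < r/24" and q0: "q > 0" and qg: "q \<le> 8*g" and bg: "W - 2*\<beta> \<le> 4*g"
    and s0: "s \<ge> 0" and s1: "s \<le> 3*\<beta>/(2*r)" and s2: "3*\<beta>/(2*r) < s + 1"
    and a: "a \<le> 8*s*g" and L: "L \<ge> (s+1)*(\<beta>-a)/q" and L2: "L^2 \<le> 4*W*g"
  shows False
proof -
  have r0: "r > 0" using r6 by simp
  have W3r: "W > 3*r" by (rule W3r_aux[OF W0 r6 r5])
  have qr: "q < r/3" using qg g by linarith
  have b1: "\<beta> > 17*W/36" using bg g W3r by linarith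
  have bpos: "\<beta> > 0" using b1 W0 by simp
  have sr: "s * r \<le> 3*\<beta>/2" using s1 r0 by (simp add: field_simps)
  have "s*(8*g) \<le> s*(r/3)" using s0 g by (intro mult_left_mono) auto
  then have "8*s*g \<le> s * (r/3)" by (simp add: algebra_simps)
  then have ab: "a \<le> \<beta>/2" using a sr by linarith
  have bma: "\<beta> - a \<ge> \<beta>/2" using ab by linarith
  have "(s+1)*(\<beta>/2)/q \<le> (s+1)*(\<beta>-a)/q"
    using bma q0 s0 by (intro divide_right_mono mult_left_mono) auto
  moreover have "(s+1)*(\<beta>/2)/(r/3) < (s+1)*(\<beta>/2)/q"
    using qr q0 s0 bpos by (intro divide_strict_left_mono) auto
  moreover have "(3*\<beta>/(2*r)) * (3*\<beta>/(2*r)) < (s+1)*(\<beta>/2)/(r/3)"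
  proof -
    have "(s+1)*(\<beta>/2)/(r/3) = (s+1) * (3*\<beta>/(2*r))" using r0 by (simp add: field_simps)
    moreover have "(3*\<beta>/(2*r)) * (3*\<beta>/(2*r)) < (s+1) * (3*\<beta>/(2*r))"
      using s2 bpos r0 by (intro mult_strict_right_mono) auto
    ultimately show ?thesis by simp
  qed
  ultimately have Lb: "L > (3*\<beta>/(2*r)) * (3*\<beta>/(2*r))" using L by linarith
  define x where "x = 3*\<beta>/(2*r)"
  have x0: "x > 0" unfolding x_def using bpos r0 by simp
  have Lb': "L > x * x" using Lb unfolding x_def .
  have "(x*x)^2 < L^2" using Lb' x0 by (intro power_strict_mono) auto
  moreover have "(x*x)^2 = x^4" by (simp add: power2_eq_square power4_eq_xxxx)
  moreover have "W * g < W * (r/24)" using g W0 by (intro mult_strict_left_mono)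
  ultimately have hL: "x^4 < W*r/6" using L2 by simp
  have xr: "x * r = 3*\<beta>/2" unfolding x_def using r0 by simp
  have hx: "17*W/24 < x * r" using xr b1 by simp
  have "(17*W/24)^4 < (x*r)^4" using hx W0 by (intro power_strict_mono) auto
  also have "(x*r)^4 = x^4 * r^4" by (simp add: power_mult_distrib)
  also have "x^4 * r^4 < W*r/6 * r^4" using hL r0 by (intro mult_strict_right_mono) auto
  also have "W*r/6 * r^4 = W * r^5 / 6" by (simp add: power_eq_if algebra_simps)
  also have "\<dots> = W^4/6" using r5 by (simp add: eval_nat_numeral)
  finally have "(17*W/24)^4 < W^4/6" .
  then have "(17/24)^4 * W^4 < 1/6 * W^4" by (simp add: power_mult_distrib power_divide)
  then show False using W0 by (simp add: power4_eq_xxxx)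
qed


lemma class_matching:
  fixes pos :: "'a \<Rightarrow> nat"
  assumes inj: "inj_on pos Q" and j: "j > 0"
    and C: "\<forall>f\<in>C. fst f \<in> Q \<and> snd f \<in> Q \<and> pos (snd f) = pos (fst f) + j \<and> pos (fst f) div j mod 2 = c"
  shows "matching C"
  unfolding matching_def
proof (intro ballI impI)
  fix e e' assume e: "e \<in> C" and e': "e' \<in> C" and ne: "e \<noteq> e'"
  obtain a b where ab: "e = (a,b)" by force
  obtain a' b' where ab': "e' = (a',b')" by force
  have h: "a \<in> Q" "b \<in> Q" "pos b = pos a + j" "pos a div j mod 2 = c"
    using C e ab by auto
  have h': "a' \<in> Q" "b' \<in> Q" "pos b' = pos a' + j" "pos a' div j mod 2 = c"
    using C e' ab' by auto
  have par: "\<And>x y. pos x = pos y + j \<Longrightarrow> pos x div j mod 2 \<noteq> pos y div j mod 2"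
  proof -
    fix x y assume "pos x = pos y + j"
    then have "pos x div j = pos y div j + 1" using j by simp
    moreover have "\<forall>k1 k2::nat. k1 = k2 + 1 \<longrightarrow> k1 mod 2 \<noteq> k2 mod 2" by presburger
    ultimately show "pos x div j mod 2 \<noteq> pos y div j mod 2" by blast
  qed
  have 1: "a \<noteq> a'"
  proof
    assume "a = a'"
    then have "pos b = pos b'" using h h' by simp
    then have "b = b'" using inj h h' unfolding inj_on_def by blast
    then show False using ne ab ab' \<open>a = a'\<close> by simp
  qed
  have 2: "b \<noteq> b'"
  proof
    assume "b = b'"
    then have "pos a = pos a'" using h h' by simp
    then have "a = a'" using inj h h' unfolding inj_on_def by blast
    then show False using 1 by simp
  qed
  have 3: "a \<noteq> b'"
  proof
    assume "a = b'"
    then have "pos a = pos a' + j" using h' by simp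
    then show False using par h h' by metis
  qed
  have 4: "b \<noteq> a'"
  proof
    assume "b = a'"
    then have "pos a' = pos a + j" using h by simp
    then show False using par h h' by metis
  qed
  show "fst e \<noteq> fst e' \<and> fst e \<noteq> snd e' \<and> snd e \<noteq> fst e' \<and> snd e \<noteq> snd e'"
    using 1 2 3 4 ab ab' by simp
qed


theorem mainTheorem12:
  fixes V :: "'a set" and A :: "('a \<times> 'a) set" and w :: "'a \<times> 'a \<Rightarrow> real"
  assumes "weighted_digraph V A w"
    and "acyclic A"
    and "\<forall>a\<in>A. w a \<ge> 1"
  shows "mac V A w \<ge> total_weight A w / 4 + total_weight A w powr 0.6 / 24"
proof -
  note wd = assms(1)
  note F = wd_facts[OF wd]
  define W where "W = total_weight A w"
  show ?thesis
  proof (cases "A = {}")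
    case True
    then have W0: "W = 0" unfolding W_def total_weight_def by simp
    have "fw A w (\<lambda>_. 0) \<le> mac V A w" by (rule round[OF wd]) auto
    then have "0 \<le> mac V A w" by (simp add: fw_def)
    then show ?thesis using W0 W_def by simp
  next
    case False
    have "real (card A) = (\<Sum>a\<in>A. (1::real))" by simp
    also have "\<dots> \<le> W" unfolding W_def total_weight_def using assms(3) by (intro sum_mono) auto
    finally have "real (card A) \<le> W" .
    moreover have "card A \<ge> 1" using False F(3) by (simp add: Suc_le_eq card_gt_0_iff)
    ultimately have W1: "W \<ge> 1" by simp
    have W0: "W > 0" using W1 by simp
    define g where "g = mac V A w - W/4"
    define r where "r = W powr 0.6"
    show ?thesis
    proof (rule ccontr)
      assume "\<not> ?thesis"
      then have gr: "g < r/24" unfolding g_def r_def W_def by simp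
      have mb: "sum w M \<le> 4*g" if MA: "M \<subseteq> A" and mM: "matching M" for M
      proof -
        have "finite M" using MA F(3) finite_subset by auto
        then obtain y where y1: "\<forall>v. \<bar>y v\<bar> \<le> 1" and y3: "(\<Sum>e\<in>M. w e) \<le> - sq A w y"
          using matching_gain[OF wd assms(2) _ MA mM] by blast
        have "W/4 - sq A w y/4 \<le> mac V A w" using cutq[OF wd] y1 W_def by simp
        then have "sum w M \<le> 4 * mac V A w - W" using y3 by linarith
        then show ?thesis unfolding g_def by (simp add: algebra_simps)
      qed
      obtain e where eA: "e \<in> A" using False by blast
      have "w e \<le> 4*g" using mb[of "{e}"] eA by (simp add: matching_def)
      then have r6: "r > 6" using assms(3) eA gr by fastforce
      have r5: "r^5 = W^3"
      proof -
        have "r^5 = W powr (of_nat 5 * 0.6)" unfolding r_def using W0 by (simp add: powr_power)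
        also have "(of_nat 5 * 0.6 :: real) = 3" by simp
        finally show ?thesis using W0 by simp
      qed
      obtain M where MA: "M \<subseteq> A" and mM: "matching M"
        and touch: "\<forall>f\<in>A. fst f \<in> fst ` M \<union> snd ` M \<or> snd f \<in> fst ` M \<union> snd ` M"
        using maximal_matching[OF F(3)] by blast
      define Q where "Q = fst ` M \<union> snd ` M"
      have finM: "finite M" using MA F(3) finite_subset by auto
      have finQ: "finite Q" unfolding Q_def using finM by simp
      have QV: "Q \<subseteq> V" unfolding Q_def using MA F(2) by auto
      have "card Q \<le> card (fst ` M) + card (snd ` M)" unfolding Q_def by (rule card_Un_le)
      also have "\<dots> \<le> card M + card M" using finM by (intro add_mono card_image_le)
      finally have cQ: "card Q \<le> 2 * card M" by simp
      have "real (card M) = (\<Sum>a\<in>M. (1::real))" by simp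
      also have "\<dots> \<le> sum w M" using assms(3) MA by (intro sum_mono) auto
      also have "\<dots> \<le> 4*g" by (rule mb[OF MA mM])
      finally have "real (card M) \<le> 4*g" .
      moreover have "real (card Q) \<le> real (2 * card M)" using cQ by (simp only: of_nat_le_iff)
      ultimately have qg: "real (card Q) \<le> 8*g" by simp
      have "Q \<noteq> {}" using touch eA unfolding Q_def by blast
      then have q0: "real (card Q) > 0" using finQ by (simp add: card_gt_0_iff)
      have touchQ: "\<forall>f\<in>A. fst f \<in> Q \<or> snd f \<in> Q" using touch unfolding Q_def by blast
      define E where "E = {f\<in>A. fst f \<in> Q \<and> snd f \<in> Q}"
      define \<beta> where "\<beta> = sum w E"
      have finE: "finite E" unfolding E_def using F(3) by simp
      have EA: "E \<subseteq> A" unfolding E_def by auto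
      have bg: "W - 2*\<beta> \<le> 4*g"
      proof -
        have "sq A w (\<lambda>x. if x \<in> Q then 1 else -1) = 2*\<beta> - W"
          unfolding \<beta>_def E_def W_def using bipartite_sq[OF F(3) touchQ, of w] by simp
        moreover have "W/4 - sq A w (\<lambda>x. if x \<in> Q then 1 else -1)/4 \<le> mac V A w"
          using cutq[OF wd, of "\<lambda>x. if x \<in> Q then 1 else -1"] W_def by simp
        ultimately have "W - 2*\<beta> \<le> 4 * mac V A w - W" by linarith
        then show ?thesis unfolding g_def by (simp add: algebra_simps)
      qed
      have b0: "\<beta> \<ge> 0" unfolding \<beta>_def using EA F(5) by (intro sum_nonneg) auto
      obtain \<rho> :: "'a \<Rightarrow> nat" where rinj: "inj_on \<rho> V"
        and rarc: "\<forall>a b. (a,b) \<in> A \<longrightarrow> a \<in> V \<longrightarrow> b \<in> V \<longrightarrow> \<rho> a < \<rho> b"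
        using ranking[OF F(1) assms(2) F(3)] by blast
      have rarc': "\<rho> (fst f) < \<rho> (snd f)" if "f \<in> A" for f
        using rarc that F(2) by (cases f) auto
      define pos where "pos x = card {c\<in>Q. \<rho> c < \<rho> x}" for x
      have pos_le: "pos x \<le> card Q" for x unfolding pos_def using finQ by (intro card_mono) auto
      have pos_mono: "pos a \<le> pos b" if "\<rho> a < \<rho> b" for a b
        unfolding pos_def using finQ that by (intro card_mono) auto
      have pos_strict: "pos a + 1 \<le> pos b" if "\<rho> a < \<rho> b" "a \<in> Q" for a b
      proof -
        have "insert a {c\<in>Q. \<rho> c < \<rho> a} \<subseteq> {c\<in>Q. \<rho> c < \<rho> b}" using that by auto
        then have "card (insert a {c\<in>Q. \<rho> c < \<rho> a}) \<le> pos b"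
          unfolding pos_def using finQ by (intro card_mono) auto
        then show ?thesis unfolding pos_def using finQ by simp
      qed
      have pos_inj: "inj_on pos Q"
      proof (rule inj_onI)
        fix a b assume a: "a \<in> Q" and b: "b \<in> Q" and eq: "pos a = pos b"
        show "a = b"
        proof (rule ccontr)
          assume "a \<noteq> b"
          then have "\<rho> a \<noteq> \<rho> b" using rinj a b QV unfolding inj_on_def by blast
          then have "\<rho> a < \<rho> b \<or> \<rho> b < \<rho> a" by arith
          then show False using pos_strict a b eq by fastforce
        qed
      qed
      define q where "q = real (card Q)"
      define t where "t x = real (pos x) / q" for x
      have t01: "\<forall>x. 0 \<le> t x \<and> t x \<le> 1"
        unfolding t_def q_def using pos_le q0 by (simp add: divide_le_eq_1)
      have tmono: "\<forall>f\<in>A. t (fst f) \<le> t (snd f)"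
        unfolding t_def using pos_mono rarc' q0 q_def by (auto intro: divide_right_mono)
      define L where "L = (\<Sum>f\<in>A. w f * (t (snd f) - t (fst f)))"
      have LW: "L^2 \<le> 4*W*g"
      proof -
        have "W/4 + L^2/(4*W) \<le> mac V A w"
          using potential[OF wd _ t01 tmono] W0 unfolding W_def L_def by simp
        then have "L^2/(4*W) \<le> g" unfolding g_def by simp
        then show ?thesis using W0 by (simp add: divide_le_eq mult.commute)
      qed
      define sp where "sp f = pos (snd f) - pos (fst f)" for f
      have spE: "pos (snd f) = pos (fst f) + sp f" "sp f \<ge> 1" if "f \<in> E" for f
      proof -
        have "pos (fst f) + 1 \<le> pos (snd f)"
          using that rarc'[of f] pos_strict unfolding E_def by auto
        then show "pos (snd f) = pos (fst f) + sp f" "sp f \<ge> 1" unfolding sp_def by auto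
      qed
      define x where "x = 3*\<beta>/(2*r)"
      have x0: "x \<ge> 0" unfolding x_def using b0 r6 by simp
      define s where "s = nat \<lfloor>x\<rfloor>"
      have s1: "real s \<le> x" unfolding s_def using x0 by simp
      have s2: "x < real s + 1" unfolding s_def using x0 by linarith
      define Es where "Es = {f\<in>E. sp f \<le> s}"
      define a where "a = sum w Es"
      have EsE: "Es \<subseteq> E" unfolding Es_def by auto
      have finEs: "finite Es" using finE EsE finite_subset by auto
      have abound: "a \<le> 8 * real s * g"
      proof -
        define \<kappa> where "\<kappa> f = (sp f, pos (fst f) div sp f mod 2)" for f
        define T where "T = {1..s} \<times> {0..<(2::nat)}"
        have kT: "\<kappa> ` Es \<subseteq> T" unfolding \<kappa>_def T_def Es_def using spE by auto
        have "a = (\<Sum>k\<in>T. sum w {f. f \<in> Es \<and> \<kappa> f = k})"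
          unfolding a_def using sum.group[OF finEs _ kT, of w] unfolding T_def by simp
        also have "\<dots> \<le> of_nat (card T) * (4*g)"
        proof (rule sum_bounded_above)
          fix k assume kT': "k \<in> T"
          show "sum w {f. f \<in> Es \<and> \<kappa> f = k} \<le> 4*g"
          proof (rule mb)
            show "{f. f \<in> Es \<and> \<kappa> f = k} \<subseteq> A" using EsE EA by auto
            show "matching {f. f \<in> Es \<and> \<kappa> f = k}"
            proof (rule class_matching[OF pos_inj, of "fst k" _ "snd k"])
              show "fst k > 0" using kT' unfolding T_def by auto
              show "\<forall>f\<in>{f. f \<in> Es \<and> \<kappa> f = k}. fst f \<in> Q \<and> snd f \<in> Q \<and>
                  pos (snd f) = pos (fst f) + fst k \<and> pos (fst f) div fst k mod 2 = snd k"
                unfolding Es_def E_def \<kappa>_def using spE unfolding E_def by auto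
            qed
          qed
        qed
        also have "card T = s * 2" unfolding T_def by (simp add: card_cartesian_product)
        finally show ?thesis by simp
      qed
      have Lb: "L \<ge> (real s + 1) * (\<beta> - a) / q"
      proof -
        have "(\<Sum>f\<in>E. w f * (t (snd f) - t (fst f))) \<le> L"
          unfolding L_def using F(3) EA tmono F(5) by (intro sum_mono2) auto
        moreover have "(\<Sum>f\<in>E. w f * (t (snd f) - t (fst f))) = (\<Sum>f\<in>E. w f * real (sp f)) / q"
          unfolding sum_divide_distrib
        proof (rule sum.cong[OF refl])
          fix f assume "f \<in> E"
          then have "real (pos (snd f)) = real (pos (fst f)) + real (sp f)" using spE by simp
          then show "w f * (t (snd f) - t (fst f)) = w f * real (sp f) / q"
            unfolding t_def by (simp add: diff_divide_distrib[symmetric])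
        qed
        moreover have "(real s + 1) * (\<beta> - a) \<le> (\<Sum>f\<in>E. w f * real (sp f))"
        proof -
          have "(real s + 1) * (\<beta> - a) = (\<Sum>f\<in>E - Es. w f * (real s + 1))"
            unfolding \<beta>_def a_def using sum_diff[OF finE EsE, of w]
            by (simp add: sum_distrib_right[symmetric] mult.commute)
          also have "\<dots> \<le> (\<Sum>f\<in>E - Es. w f * real (sp f))"
          proof (rule sum_mono)
            fix f assume "f \<in> E - Es"
            then have fE: "f \<in> E" "\<not> sp f \<le> s" unfolding Es_def by auto
            then have "real s + 1 \<le> real (sp f)" by simp
            moreover have "w f \<ge> 0" using fE EA F(5)[of f] by blast
            ultimately show "w f * (real s + 1) \<le> w f * real (sp f)" by (intro mult_left_mono)
          qed
          also have "\<dots> \<le> (\<Sum>f\<in>E. w f * real (sp f))"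
          proof (rule sum_mono2[OF finE])
            show "E - Es \<subseteq> E" by auto
            fix f assume "f \<in> E - (E - Es)"
            then have "f \<in> A" using EA by auto
            then show "0 \<le> w f * real (sp f)" using F(5)[of f] by simp
          qed
          finally show ?thesis .
        qed
        ultimately show ?thesis using q0 q_def by (smt (verit) divide_right_mono)
      qed
      have s0: "0 \<le> real s" by simp
      show False
        by (rule numeric[OF W0 r6 r5 gr q0[folded q_def] qg[folded q_def] bg s0
            s1[unfolded x_def] s2[unfolded x_def] abound Lb LW])
    qed
  qed
qed

end
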